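(* Let $\mathscr V$ be a braided monoidal category with braiding $c$. The following are equivalent: (1) $\mathscr V$ is symmetric, i.e. $c_{X',X}\circ c_{X,X'}=1$ for all $X,X'$; (2) for every left $\mathscr V$-graded category $\mathscr C$ and every $\mathrm V$-graded square $(f,g,\varphi,\varphi')$ in $\mathscr C$, the quadruple $(\varphi,\varphi',f,g)$ is also a $\mathrm V$-graded square in $\mathscr C$.
   Context: $\mathscr V=(\mathscr V,\otimes,I,a,\ell,r)$ is a monoidal category with braiding $c_{X,Y}\colon X\otimes Y\to Y\otimes X$. A left $\mathscr V$-graded category $\mathscr C$ has a set of objects, sets $\mathscr C_X(A,B)$ of graded morphisms of grade $X\in\mathscr V$, reindexings $\alpha^*f\in\mathscr C_Y(A,B)$ along $\alpha\colon Y\to X$, composites $g\circ f\in\mathscr C_{Y\otimes X}(A,C)$ for $f\in\mathscr C_X(A,B)$, $g\in\mathscr C_Y(B,C)$, identities $\mathsf i_A\in\mathscr C_I(A,A)$, with functorial reindexing, $\beta^*g\circ\alpha^*f=(\beta\otimes\alpha)^*(g\circ f)$, $(h\circ g)\circ f=a^*(h\circ(g\circ f))$, $f\circ\mathsf i_A=r_X^*f$, $\mathsf i_B\circ f=\ell_X^*f$. (E.g. $\mathscr V$ itself with $\mathscr V_X(A,B)=\mathscr V(X\otimes A,B)$.) For braided $\mathscr V$, a $\mathrm V$-graded square in $\mathscr C$ is a quadruple $(f,g,\varphi,\varphi')$ with $f\in\mathscr C_X(A,A')$, $g\in\mathscr C_X(B,B')$, $\varphi\in\mathscr C_{X'}(A,B)$,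 $\varphi'\in\mathscr C_{X'}(A',B')$ (for some $X,X'$) such that $g\circ\varphi=c_{X,X'}^*(\varphi'\circ f)$ in $\mathscr C_{X\otimes X'}(A,B')$. *)

theory Defs
  imports Main
begin

record ('o,'m) mcat =
  Ob :: "'o set"
  Ar :: "'m set"
  dm :: "'m \<Rightarrow> 'o"
  cd :: "'m \<Rightarrow> 'o"
  cp :: "'m \<Rightarrow> 'm \<Rightarrow> 'm"        (* cp g f = g o f *)
  ident :: "'o \<Rightarrow> 'm"
  tO :: "'o \<Rightarrow> 'o \<Rightarrow> 'o"
  tM :: "'m \<Rightarrow> 'm \<Rightarrow> 'm"
  unitO :: "'o"
  asc :: "'o \<Rightarrow> 'o \<Rightarrow> 'o \<Rightarrow> 'm"
  lunit :: "'o \<Rightarrow> 'm"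
  runit :: "'o \<Rightarrow> 'm"
  brd :: "'o \<Rightarrow> 'o \<Rightarrow> 'm"

definition Hom :: "('o,'m,'z) mcat_scheme \<Rightarrow> 'o \<Rightarrow> 'o \<Rightarrow> 'm set" where
  "Hom V A B = {f \<in> Ar V. dm V f = A \<and> cd V f = B}"

definition is_iso :: "('o,'m,'z) mcat_scheme \<Rightarrow> 'm \<Rightarrow> bool" where
  "is_iso V f \<longleftrightarrow> f \<in> Ar V \<and> (\<exists>g \<in> Hom V (cd V f) (dm V f).
      cp V g f = ident V (dm V f) \<and> cp V f g = ident V (cd V f))"

definition minv :: "('o,'m,'z) mcat_scheme \<Rightarrow> 'm \<Rightarrow> 'm" where
  "minv V f = (THE g. g \<in> Hom V (cd V f) (dm V f) \<and>
      cp V g f = ident V (dm V f) \<and> cp V f g = ident V (cd V f))"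

definition is_category :: "('o,'m,'z) mcat_scheme \<Rightarrow> bool" where
  "is_category V \<longleftrightarrow>
    (\<forall>f \<in> Ar V. dm V f \<in> Ob V \<and> cd V f \<in> Ob V) \<and>
    (\<forall>A \<in> Ob V. ident V A \<in> Hom V A A) \<and>
    (\<forall>A B C f g. f \<in> Hom V A B \<longrightarrow> g \<in> Hom V B C \<longrightarrow> cp V g f \<in> Hom V A C) \<and>
    (\<forall>A B f. f \<in> Hom V A B \<longrightarrow> cp V f (ident V A) = f \<and> cp V (ident V B) f = f) \<and>
    (\<forall>A B C D f g h. f \<in> Hom V A B \<longrightarrow> g \<in> Hom V B C \<longrightarrow> h \<in> Hom V C D \<longrightarrow>
        cp V h (cp V g f) = cp V (cp V h g) f)"

definition is_monoidal :: "('o,'m,'z) mcat_scheme \<Rightarrow> bool" where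
  "is_monoidal V \<longleftrightarrow> is_category V \<and>
    \<comment> \<open>tensor is a bifunctor\<close>
    (\<forall>A \<in> Ob V. \<forall>B \<in> Ob V. tO V A B \<in> Ob V) \<and>
    (\<forall>A B C D f g. f \<in> Hom V A B \<longrightarrow> g \<in> Hom V C D \<longrightarrow>
        tM V f g \<in> Hom V (tO V A C) (tO V B D)) \<and>
    (\<forall>A \<in> Ob V. \<forall>B \<in> Ob V. tM V (ident V A) (ident V B) = ident V (tO V A B)) \<and>
    (\<forall>A B C A' B' C' f g f' g'. f \<in> Hom V A B \<longrightarrow> g \<in> Hom V B C \<longrightarrow>
        f' \<in> Hom V A' B' \<longrightarrow> g' \<in> Hom V B' C' \<longrightarrow>
        tM V (cp V g f) (cp V g' f') = cp V (tM V g g') (tM V f f')) \<and>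
    \<comment> \<open>unit object\<close>
    unitO V \<in> Ob V \<and>
    \<comment> \<open>associator: natural isomorphism\<close>
    (\<forall>X \<in> Ob V. \<forall>Y \<in> Ob V. \<forall>Z \<in> Ob V.
        asc V X Y Z \<in> Hom V (tO V (tO V X Y) Z) (tO V X (tO V Y Z)) \<and> is_iso V (asc V X Y Z)) \<and>
    (\<forall>X X' Y Y' Z Z' f g h. f \<in> Hom V X X' \<longrightarrow> g \<in> Hom V Y Y' \<longrightarrow> h \<in> Hom V Z Z' \<longrightarrow>
        cp V (asc V X' Y' Z') (tM V (tM V f g) h) = cp V (tM V f (tM V g h)) (asc V X Y Z)) \<and>
    \<comment> \<open>unitors: natural isomorphisms\<close>
    (\<forall>X \<in> Ob V. lunit V X \<in> Hom V (tO V (unitO V) X) X \<and> is_iso V (lunit V X)) \<and>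
    (\<forall>X \<in> Ob V. runit V X \<in> Hom V (tO V X (unitO V)) X \<and> is_iso V (runit V X)) \<and>
    (\<forall>X X' f. f \<in> Hom V X X' \<longrightarrow>
        cp V (lunit V X') (tM V (ident V (unitO V)) f) = cp V f (lunit V X)) \<and>
    (\<forall>X X' f. f \<in> Hom V X X' \<longrightarrow>
        cp V (runit V X') (tM V f (ident V (unitO V))) = cp V f (runit V X)) \<and>
    \<comment> \<open>pentagon\<close>
    (\<forall>W \<in> Ob V. \<forall>X \<in> Ob V. \<forall>Y \<in> Ob V. \<forall>Z \<in> Ob V.
        cp V (tM V (ident V W) (asc V X Y Z))
             (cp V (asc V W (tO V X Y) Z) (tM V (asc V W X Y) (ident V Z)))
        = cp V (asc V W X (tO V Y Z)) (asc V (tO V W X) Y Z)) \<and>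
    \<comment> \<open>triangle\<close>
    (\<forall>X \<in> Ob V. \<forall>Y \<in> Ob V.
        cp V (tM V (ident V X) (lunit V Y)) (asc V X (unitO V) Y)
        = tM V (runit V X) (ident V Y))"

definition is_braided :: "('o,'m,'z) mcat_scheme \<Rightarrow> bool" where
  "is_braided V \<longleftrightarrow> is_monoidal V \<and>
    (\<forall>X \<in> Ob V. \<forall>Y \<in> Ob V.
        brd V X Y \<in> Hom V (tO V X Y) (tO V Y X) \<and> is_iso V (brd V X Y)) \<and>
    (\<forall>X X' Y Y' f g. f \<in> Hom V X X' \<longrightarrow> g \<in> Hom V Y Y' \<longrightarrow>
        cp V (brd V X' Y') (tM V f g) = cp V (tM V g f) (brd V X Y)) \<and>
    \<comment> \<open>hexagon 1\<close>
    (\<forall>X \<in> Ob V. \<forall>Y \<in> Ob V. \<forall>Z \<in> Ob V.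
        cp V (asc V Y Z X) (cp V (brd V X (tO V Y Z)) (asc V X Y Z))
        = cp V (tM V (ident V Y) (brd V X Z))
            (cp V (asc V Y X Z) (tM V (brd V X Y) (ident V Z)))) \<and>
    \<comment> \<open>hexagon 2\<close>
    (\<forall>X \<in> Ob V. \<forall>Y \<in> Ob V. \<forall>Z \<in> Ob V.
        cp V (minv V (asc V Z X Y)) (cp V (brd V (tO V X Y) Z) (minv V (asc V X Y Z)))
        = cp V (tM V (brd V X Z) (ident V Y))
            (cp V (minv V (asc V X Z Y)) (tM V (ident V X) (brd V Y Z))))"

definition is_symmetric :: "('o,'m,'z) mcat_scheme \<Rightarrow> bool" where
  "is_symmetric V \<longleftrightarrow> (\<forall>X \<in> Ob V. \<forall>X' \<in> Ob V.
      cp V (brd V X' X) (brd V X X') = ident V (tO V X X'))"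

text \<open>Objects of type 'c, graded morphisms of type 'd. Operations carry the
relevant grades/objects explicitly, so graded hom-sets need not be disjoint.\<close>

record ('o,'m,'c,'d) gcat =
  gOb :: "'c set"
  gHom :: "'o \<Rightarrow> 'c \<Rightarrow> 'c \<Rightarrow> 'd set"
  reix :: "'c \<Rightarrow> 'c \<Rightarrow> 'm \<Rightarrow> 'd \<Rightarrow> 'd"
  gcp :: "'o \<Rightarrow> 'o \<Rightarrow> 'c \<Rightarrow> 'c \<Rightarrow> 'c \<Rightarrow> 'd \<Rightarrow> 'd \<Rightarrow> 'd"
     (* gcp Y X A B C g f = g o f  for f in C_X(A,B), g in C_Y(B,C) *)
  gid :: "'c \<Rightarrow> 'd"

definition is_graded_cat ::
  "('o,'m,'z) mcat_scheme \<Rightarrow> ('o,'m,'c,'d,'w) gcat_scheme \<Rightarrow> bool" where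
  "is_graded_cat V C \<longleftrightarrow>
    (\<forall>X \<in> Ob V. \<forall>Y \<in> Ob V. \<forall>A \<in> gOb C. \<forall>B \<in> gOb C. \<forall>\<alpha> f.
        \<alpha> \<in> Hom V Y X \<longrightarrow> f \<in> gHom C X A B \<longrightarrow> reix C A B \<alpha> f \<in> gHom C Y A B) \<and>
    (\<forall>X \<in> Ob V. \<forall>Y \<in> Ob V. \<forall>A \<in> gOb C. \<forall>B \<in> gOb C. \<forall>D \<in> gOb C. \<forall>f g.
        f \<in> gHom C X A B \<longrightarrow> g \<in> gHom C Y B D \<longrightarrow>
        gcp C Y X A B D g f \<in> gHom C (tO V Y X) A D) \<and>
    (\<forall>A \<in> gOb C. gid C A \<in> gHom C (unitO V) A A) \<and>
    \<comment> \<open>functoriality of reindexing\<close>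
    (\<forall>X \<in> Ob V. \<forall>A \<in> gOb C. \<forall>B \<in> gOb C. \<forall>f.
        f \<in> gHom C X A B \<longrightarrow> reix C A B (ident V X) f = f) \<and>
    (\<forall>X \<in> Ob V. \<forall>Y \<in> Ob V. \<forall>Z \<in> Ob V. \<forall>A \<in> gOb C. \<forall>B \<in> gOb C. \<forall>\<alpha> \<beta> f.
        \<alpha> \<in> Hom V Y X \<longrightarrow> \<beta> \<in> Hom V Z Y \<longrightarrow> f \<in> gHom C X A B \<longrightarrow>
        reix C A B (cp V \<alpha> \<beta>) f = reix C A B \<beta> (reix C A B \<alpha> f)) \<and>
    \<comment> \<open>beta^* g o alpha^* f = (beta (x) alpha)^* (g o f)\<close>
    (\<forall>X \<in> Ob V. \<forall>X' \<in> Ob V. \<forall>Y \<in> Ob V. \<forall>Y' \<in> Ob V.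
      \<forall>A \<in> gOb C. \<forall>B \<in> gOb C. \<forall>D \<in> gOb C. \<forall>\<alpha> \<beta> f g.
        \<alpha> \<in> Hom V X' X \<longrightarrow> \<beta> \<in> Hom V Y' Y \<longrightarrow> f \<in> gHom C X A B \<longrightarrow> g \<in> gHom C Y B D \<longrightarrow>
        gcp C Y' X' A B D (reix C B D \<beta> g) (reix C A B \<alpha> f)
        = reix C A D (tM V \<beta> \<alpha>) (gcp C Y X A B D g f)) \<and>
    \<comment> \<open>(h o g) o f = a^* (h o (g o f))\<close>
    (\<forall>X \<in> Ob V. \<forall>Y \<in> Ob V. \<forall>Z \<in> Ob V.
      \<forall>A \<in> gOb C. \<forall>B \<in> gOb C. \<forall>D \<in> gOb C. \<forall>E \<in> gOb C. \<forall>f g h.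
        f \<in> gHom C X A B \<longrightarrow> g \<in> gHom C Y B D \<longrightarrow> h \<in> gHom C Z D E \<longrightarrow>
        gcp C (tO V Z Y) X A B E (gcp C Z Y B D E h g) f
        = reix C A E (asc V Z Y X) (gcp C Z (tO V Y X) A D E h (gcp C Y X A B D g f))) \<and>
    \<comment> \<open>unit laws\<close>
    (\<forall>X \<in> Ob V. \<forall>A \<in> gOb C. \<forall>B \<in> gOb C. \<forall>f. f \<in> gHom C X A B \<longrightarrow>
        gcp C X (unitO V) A A B f (gid C A) = reix C A B (runit V X) f \<and>
        gcp C (unitO V) X A B B (gid C B) f = reix C A B (lunit V X) f)"

definition is_graded_square ::
  "('o,'m,'z) mcat_scheme \<Rightarrow> ('o,'m,'c,'d,'w) gcat_scheme \<Rightarrow>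
   'o \<Rightarrow> 'o \<Rightarrow> 'c \<Rightarrow> 'c \<Rightarrow> 'c \<Rightarrow> 'c \<Rightarrow> 'd \<Rightarrow> 'd \<Rightarrow> 'd \<Rightarrow> 'd \<Rightarrow> bool" where
  "is_graded_square V C X X' A A' B B' f g \<phi> \<phi>' \<longleftrightarrow>
     X \<in> Ob V \<and> X' \<in> Ob V \<and> A \<in> gOb C \<and> A' \<in> gOb C \<and> B \<in> gOb C \<and> B' \<in> gOb C \<and>
     f \<in> gHom C X A A' \<and> g \<in> gHom C X B B' \<and>
     \<phi> \<in> gHom C X' A B \<and> \<phi>' \<in> gHom C X' A' B' \<and>
     gcp C X X' A B B' g \<phi> = reix C A B' (brd V X X') (gcp C X' X A A' B' \<phi>' f)"

definition squares_transpose ::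
  "('o,'m,'z) mcat_scheme \<Rightarrow> ('o,'m,'c,'d) gcat \<Rightarrow> bool" where
  "squares_transpose V C \<longleftrightarrow>
    (\<forall>X X' A A' B B' f g \<phi> \<phi>'.
       is_graded_square V C X X' A A' B B' f g \<phi> \<phi>' \<longrightarrow>
       is_graded_square V C X' X A B A' B' \<phi> \<phi>' f g)"

end

theory Submission
  imports Defs
begin


locale mon =
  fixes V :: "('o,'m,'z) mcat_scheme"
  assumes M: "is_monoidal V"
begin

lemmas Mu = M[unfolded is_monoidal_def]
lemma cat: "is_category V" using Mu by blast
lemmas Cu = cat[unfolded is_category_def]

lemma hom_ob: "f \<in> Hom V A B \<Longrightarrow> A \<in> Ob V \<and> B \<in> Ob V"
  using Cu[THEN conjunct1] unfolding Hom_def by blast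

lemma id_hom[intro]: "A \<in> Ob V \<Longrightarrow> ident V A \<in> Hom V A A"
  using Cu[THEN conjunct2, THEN conjunct1] by blast

lemma cp_hom[intro]: "f \<in> Hom V A B \<Longrightarrow> g \<in> Hom V B C \<Longrightarrow> cp V g f \<in> Hom V A C"
  using Cu[THEN conjunct2, THEN conjunct2, THEN conjunct1] by blast

lemma id_r: "f \<in> Hom V A B \<Longrightarrow> cp V f (ident V A) = f"
  using Cu[THEN conjunct2, THEN conjunct2, THEN conjunct2, THEN conjunct1] by blast
lemma id_l: "f \<in> Hom V A B \<Longrightarrow> cp V (ident V B) f = f"
  using Cu[THEN conjunct2, THEN conjunct2, THEN conjunct2, THEN conjunct1] by blast

lemma cassoc: "f \<in> Hom V A B \<Longrightarrow> g \<in> Hom V B C \<Longrightarrow> h \<in> Hom V C D \<Longrightarrow>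
        cp V h (cp V g f) = cp V (cp V h g) f"
  using Cu[THEN conjunct2, THEN conjunct2, THEN conjunct2, THEN conjunct2] by blast

lemma tO_ob[intro]: "A \<in> Ob V \<Longrightarrow> B \<in> Ob V \<Longrightarrow> tO V A B \<in> Ob V"
  using Mu[THEN conjunct2, THEN conjunct1] by blast

lemma tM_hom[intro]: "f \<in> Hom V A B \<Longrightarrow> g \<in> Hom V C D \<Longrightarrow> tM V f g \<in> Hom V (tO V A C) (tO V B D)"
  using Mu[THEN conjunct2, THEN conjunct2, THEN conjunct1] by blast

lemma tM_id: "A \<in> Ob V \<Longrightarrow> B \<in> Ob V \<Longrightarrow> tM V (ident V A) (ident V B) = ident V (tO V A B)"
  using Mu[THEN conjunct2, THEN conjunct2, THEN conjunct2, THEN conjunct1] by blast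

lemma tM_cp: "f \<in> Hom V A B \<Longrightarrow> g \<in> Hom V B C \<Longrightarrow>
        f' \<in> Hom V A' B' \<Longrightarrow> g' \<in> Hom V B' C' \<Longrightarrow>
        tM V (cp V g f) (cp V g' f') = cp V (tM V g g') (tM V f f')"
  using Mu[THEN conjunct2, THEN conjunct2, THEN conjunct2, THEN conjunct2, THEN conjunct1] by blast

lemma unit_ob[intro]: "unitO V \<in> Ob V"
  using Mu[THEN conjunct2, THEN conjunct2, THEN conjunct2, THEN conjunct2, THEN conjunct2, THEN conjunct1] by blast

lemma asc_hom[intro]: "X \<in> Ob V \<Longrightarrow> Y \<in> Ob V \<Longrightarrow> Z \<in> Ob V \<Longrightarrow>
   asc V X Y Z \<in> Hom V (tO V (tO V X Y) Z) (tO V X (tO V Y Z))"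
  using Mu[THEN conjunct2, THEN conjunct2, THEN conjunct2, THEN conjunct2, THEN conjunct2, THEN conjunct2, THEN conjunct1] by blast
lemma asc_iso: "X \<in> Ob V \<Longrightarrow> Y \<in> Ob V \<Longrightarrow> Z \<in> Ob V \<Longrightarrow> is_iso V (asc V X Y Z)"
  using Mu[THEN conjunct2, THEN conjunct2, THEN conjunct2, THEN conjunct2, THEN conjunct2, THEN conjunct2, THEN conjunct1] by blast

lemma asc_nat: "f \<in> Hom V X X' \<Longrightarrow> g \<in> Hom V Y Y' \<Longrightarrow> h \<in> Hom V Z Z' \<Longrightarrow>
        cp V (asc V X' Y' Z') (tM V (tM V f g) h) = cp V (tM V f (tM V g h)) (asc V X Y Z)"
  using Mu[THEN conjunct2, THEN conjunct2, THEN conjunct2, THEN conjunct2, THEN conjunct2, THEN conjunct2, THEN conjunct2, THEN conjunct1] by blast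

lemma lunit_hom[intro]: "X \<in> Ob V \<Longrightarrow> lunit V X \<in> Hom V (tO V (unitO V) X) X"
  using Mu[THEN conjunct2, THEN conjunct2, THEN conjunct2, THEN conjunct2, THEN conjunct2, THEN conjunct2, THEN conjunct2, THEN conjunct2, THEN conjunct1] by blast
lemma lunit_iso: "X \<in> Ob V \<Longrightarrow> is_iso V (lunit V X)"
  using Mu[THEN conjunct2, THEN conjunct2, THEN conjunct2, THEN conjunct2, THEN conjunct2, THEN conjunct2, THEN conjunct2, THEN conjunct2, THEN conjunct1] by blast
lemma runit_hom[intro]: "X \<in> Ob V \<Longrightarrow> runit V X \<in> Hom V (tO V X (unitO V)) X"
  using Mu[THEN conjunct2, THEN conjunct2, THEN conjunct2, THEN conjunct2, THEN conjunct2, THEN conjunct2, THEN conjunct2, THEN conjunct2, THEN conjunct2, THEN conjunct1] by blast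
lemma runit_iso: "X \<in> Ob V \<Longrightarrow> is_iso V (runit V X)"
  using Mu[THEN conjunct2, THEN conjunct2, THEN conjunct2, THEN conjunct2, THEN conjunct2, THEN conjunct2, THEN conjunct2, THEN conjunct2, THEN conjunct2, THEN conjunct1] by blast

lemma lunit_nat: "f \<in> Hom V X X' \<Longrightarrow>
        cp V (lunit V X') (tM V (ident V (unitO V)) f) = cp V f (lunit V X)"
  using Mu[THEN conjunct2, THEN conjunct2, THEN conjunct2, THEN conjunct2, THEN conjunct2, THEN conjunct2, THEN conjunct2, THEN conjunct2, THEN conjunct2, THEN conjunct2, THEN conjunct1] by blast
lemma runit_nat: "f \<in> Hom V X X' \<Longrightarrow>
        cp V (runit V X') (tM V f (ident V (unitO V))) = cp V f (runit V X)"
  using Mu[THEN conjunct2, THEN conjunct2, THEN conjunct2, THEN conjunct2, THEN conjunct2, THEN conjunct2, THEN conjunct2, THEN conjunct2, THEN conjunct2, THEN conjunct2, THEN conjunct2, THEN conjunct1] by blast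

lemma pentagon: "W \<in> Ob V \<Longrightarrow> X \<in> Ob V \<Longrightarrow> Y \<in> Ob V \<Longrightarrow> Z \<in> Ob V \<Longrightarrow>
        cp V (tM V (ident V W) (asc V X Y Z))
             (cp V (asc V W (tO V X Y) Z) (tM V (asc V W X Y) (ident V Z)))
        = cp V (asc V W X (tO V Y Z)) (asc V (tO V W X) Y Z)"
  using Mu[THEN conjunct2, THEN conjunct2, THEN conjunct2, THEN conjunct2, THEN conjunct2, THEN conjunct2, THEN conjunct2, THEN conjunct2, THEN conjunct2, THEN conjunct2, THEN conjunct2, THEN conjunct2, THEN conjunct1] by blast

lemma triangle: "X \<in> Ob V \<Longrightarrow> Y \<in> Ob V \<Longrightarrow>
        cp V (tM V (ident V X) (lunit V Y)) (asc V X (unitO V) Y)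
        = tM V (runit V X) (ident V Y)"
  using Mu[THEN conjunct2, THEN conjunct2, THEN conjunct2, THEN conjunct2, THEN conjunct2, THEN conjunct2, THEN conjunct2, THEN conjunct2, THEN conjunct2, THEN conjunct2, THEN conjunct2, THEN conjunct2, THEN conjunct2] by blast

lemma iso_inv: assumes "is_iso V f" "f \<in> Hom V A B"
  obtains g where "g \<in> Hom V B A" "cp V g f = ident V A" "cp V f g = ident V B"
  using assms unfolding is_iso_def Hom_def by auto

lemma rcancel:
  assumes "f \<in> Hom V A B" "f' \<in> Hom V B A" "cp V f f' = ident V B"
    "x \<in> Hom V B C" "y \<in> Hom V B C" "cp V x f = cp V y f"
  shows "x = y"
proof -
  have "x = cp V x (cp V f f')" using assms id_r by simp
  also have "\<dots> = cp V (cp V x f) f'" using assms cassoc by blast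
  also have "\<dots> = cp V (cp V y f) f'" using assms by simp
  also have "\<dots> = cp V y (cp V f f')" using assms cassoc by metis
  also have "\<dots> = y" using assms id_r by simp
  finally show ?thesis .
qed

lemma lcancel:
  assumes "f \<in> Hom V B C" "f' \<in> Hom V C B" "cp V f' f = ident V B"
    "x \<in> Hom V A B" "y \<in> Hom V A B" "cp V f x = cp V f y"
  shows "x = y"
proof -
  have "x = cp V (cp V f' f) x" using assms id_l by simp
  also have "\<dots> = cp V f' (cp V f x)" using assms cassoc by metis
  also have "\<dots> = cp V f' (cp V f y)" using assms by simp
  also have "\<dots> = cp V (cp V f' f) y" using assms cassoc by metis
  also have "\<dots> = y" using assms id_l by simp
  finally show ?thesis .
qed

lemma iso_rcancel: "is_iso V f \<Longrightarrow> f \<in> Hom V A B \<Longrightarrow> x \<in> Hom V B C \<Longrightarrow> y \<in> Hom V B C \<Longrightarrow>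
   cp V x f = cp V y f \<Longrightarrow> x = y"
  by (metis iso_inv rcancel)
lemma iso_lcancel: "is_iso V f \<Longrightarrow> f \<in> Hom V B C \<Longrightarrow> x \<in> Hom V A B \<Longrightarrow> y \<in> Hom V A B \<Longrightarrow>
   cp V f x = cp V f y \<Longrightarrow> x = y"
  by (metis iso_inv lcancel)


lemma iso_tM_id:
  assumes fi: "is_iso V f" and f: "f \<in> Hom V A B" and C: "C \<in> Ob V"
  shows "is_iso V (tM V f (ident V C))"
proof -
  obtain g where g: "g \<in> Hom V B A" "cp V g f = ident V A" "cp V f g = ident V B"
    using iso_inv[OF fi f] by metis
  have AB: "A \<in> Ob V" "B \<in> Ob V" using hom_ob f by auto
  have iC: "ident V C \<in> Hom V C C" using C by blast
  have h1: "tM V f (ident V C) \<in> Hom V (tO V A C) (tO V B C)" using f iC by blast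
  have h2: "tM V g (ident V C) \<in> Hom V (tO V B C) (tO V A C)" using g iC by blast
  have e1: "cp V (tM V g (ident V C)) (tM V f (ident V C)) = ident V (tO V A C)"
    using tM_cp[OF f g(1) iC iC] g(2) id_r[OF iC] tM_id AB C by metis
  have e2: "cp V (tM V f (ident V C)) (tM V g (ident V C)) = ident V (tO V B C)"
    using tM_cp[OF g(1) f iC iC] g(3) id_r[OF iC] tM_id AB C by metis
  show ?thesis unfolding is_iso_def using h1 h2 e1 e2 by (auto simp: Hom_def)
qed

lemma faithful_I:
  assumes "f \<in> Hom V A B" "g \<in> Hom V A B"
    "tM V (ident V (unitO V)) f = tM V (ident V (unitO V)) g"
  shows "f = g"
proof -
  have A: "A \<in> Ob V" "B \<in> Ob V" using hom_ob assms by auto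
  have "cp V f (lunit V A) = cp V g (lunit V A)"
    using lunit_nat[OF assms(1)] lunit_nat[OF assms(2)] assms(3) by simp
  thus ?thesis using iso_rcancel[OF lunit_iso[OF A(1)] lunit_hom[OF A(1)]] assms by blast
qed

end

context mon begin

lemma kelly:
  assumes X: "X \<in> Ob V" and Y: "Y \<in> Ob V"
  shows "cp V (lunit V (tO V X Y)) (asc V (unitO V) X Y) = tM V (lunit V X) (ident V Y)"
proof -
  let ?I = "unitO V"
  let ?a1 = "asc V ?I (tO V ?I X) Y"
  let ?a2 = "asc V ?I ?I X"
  let ?aIXY = "asc V ?I X Y"
  let ?lXY = "lunit V (tO V X Y)"
  let ?L = "cp V ?lXY ?aIXY"
  let ?R = "tM V (lunit V X) (ident V Y)"
  let ?P = "tM V ?a2 (ident V Y)"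
  have I: "?I \<in> Ob V" by blast
  have XY: "tO V X Y \<in> Ob V" using X Y by blast
  have IX: "tO V ?I X \<in> Ob V" using X by blast
  have II: "tO V ?I ?I \<in> Ob V" by blast
  have haIXY: "?aIXY \<in> Hom V (tO V (tO V ?I X) Y) (tO V ?I (tO V X Y))" using X Y by blast
  have hlXY: "?lXY \<in> Hom V (tO V ?I (tO V X Y)) (tO V X Y)" using XY by blast
  have hL: "?L \<in> Hom V (tO V (tO V ?I X) Y) (tO V X Y)" using haIXY hlXY by blast
  have hR: "?R \<in> Hom V (tO V (tO V ?I X) Y) (tO V X Y)" using X Y by blast
  have ha1: "?a1 \<in> Hom V (tO V (tO V ?I (tO V ?I X)) Y) (tO V ?I (tO V (tO V ?I X) Y))"
    using IX Y by blast
  have ha2: "?a2 \<in> Hom V (tO V (tO V ?I ?I) X) (tO V ?I (tO V ?I X))" using X by blast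
  have hP: "?P \<in> Hom V (tO V (tO V (tO V ?I ?I) X) Y) (tO V (tO V ?I (tO V ?I X)) Y)"
    using ha2 Y by blast
  have hid: "ident V ?I \<in> Hom V ?I ?I" by blast
  have hidY: "ident V Y \<in> Hom V Y Y" using Y by blast
  have h1L: "tM V (ident V ?I) ?L = cp V (tM V (ident V ?I) ?lXY) (tM V (ident V ?I) ?aIXY)"
    using tM_cp[OF hid hid haIXY hlXY] id_r[OF hid] by simp
  have h1aIXY: "tM V (ident V ?I) ?aIXY \<in> Hom V (tO V ?I (tO V (tO V ?I X) Y)) (tO V ?I (tO V ?I (tO V X Y)))"
    using hid haIXY by blast
  have h1lXY: "tM V (ident V ?I) ?lXY \<in> Hom V (tO V ?I (tO V ?I (tO V X Y))) (tO V ?I (tO V X Y))"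
    using hid hlXY by blast
  have pent: "cp V (tM V (ident V ?I) ?aIXY) (cp V ?a1 ?P)
     = cp V (asc V ?I ?I (tO V X Y)) (asc V (tO V ?I ?I) X Y)"
    using pentagon[OF I I X Y] .
  have tri1: "cp V (tM V (ident V ?I) ?lXY) (asc V ?I ?I (tO V X Y)) = tM V (runit V ?I) (ident V (tO V X Y))"
    using triangle[OF I XY] .
  have tri2: "cp V (tM V (ident V ?I) (lunit V X)) ?a2 = tM V (runit V ?I) (ident V X)"
    using triangle[OF I X] .
  have hr: "runit V ?I \<in> Hom V (tO V ?I ?I) ?I" using I by blast
  have hidX: "ident V X \<in> Hom V X X" using X by blast
  have natA: "cp V ?aIXY (tM V (tM V (runit V ?I) (ident V X)) (ident V Y))
     = cp V (tM V (runit V ?I) (tM V (ident V X) (ident V Y))) (asc V (tO V ?I ?I) X Y)"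
    using asc_nat[OF hr hidX hidY] .
  have hlX: "lunit V X \<in> Hom V (tO V ?I X) X" using X by blast
  have natB: "cp V ?aIXY (tM V (tM V (ident V ?I) (lunit V X)) (ident V Y))
     = cp V (tM V (ident V ?I) (tM V (lunit V X) (ident V Y))) ?a1"
    using asc_nat[OF hid hlX hidY] .
  have h1lX: "tM V (ident V ?I) (lunit V X) \<in> Hom V (tO V ?I (tO V ?I X)) (tO V ?I X)"
    using hid hlX by blast
  have hasc2: "asc V ?I ?I (tO V X Y) \<in> Hom V (tO V (tO V ?I ?I) (tO V X Y)) (tO V ?I (tO V ?I (tO V X Y)))"
    using XY by blast
  have hasc3: "asc V (tO V ?I ?I) X Y \<in> Hom V (tO V (tO V (tO V ?I ?I) X) Y) (tO V (tO V ?I ?I) (tO V X Y))"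
    using X Y II by blast
  have LHS: "cp V (tM V (ident V ?I) ?L) (cp V ?a1 ?P)
      = cp V ?aIXY (tM V (tM V (runit V ?I) (ident V X)) (ident V Y))"
  proof -
    have "cp V (tM V (ident V ?I) ?L) (cp V ?a1 ?P)
        = cp V (tM V (ident V ?I) ?lXY) (cp V (tM V (ident V ?I) ?aIXY) (cp V ?a1 ?P))"
      using h1L cassoc[OF cp_hom[OF hP ha1] h1aIXY h1lXY] by simp
    also have "\<dots> = cp V (tM V (ident V ?I) ?lXY) (cp V (asc V ?I ?I (tO V X Y)) (asc V (tO V ?I ?I) X Y))"
      using pent by simp
    also have "\<dots> = cp V (tM V (runit V ?I) (ident V (tO V X Y))) (asc V (tO V ?I ?I) X Y)"
      using cassoc[OF hasc3 hasc2 h1lXY] tri1 by simp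
    also have "\<dots> = cp V ?aIXY (tM V (tM V (runit V ?I) (ident V X)) (ident V Y))"
      using natA tM_id[OF X Y] by simp
    finally show ?thesis .
  qed
  have RHS: "cp V (tM V (ident V ?I) ?R) (cp V ?a1 ?P)
      = cp V ?aIXY (tM V (tM V (runit V ?I) (ident V X)) (ident V Y))"
  proof -
    have h1R: "tM V (ident V ?I) ?R \<in> Hom V (tO V ?I (tO V (tO V ?I X) Y)) (tO V ?I (tO V X Y))"
      using hid hR by blast
    have "cp V (tM V (ident V ?I) ?R) (cp V ?a1 ?P) = cp V (cp V (tM V (ident V ?I) ?R) ?a1) ?P"
      using cassoc[OF hP ha1 h1R] .
    also have "\<dots> = cp V (cp V ?aIXY (tM V (tM V (ident V ?I) (lunit V X)) (ident V Y))) ?P"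
      using natB by simp
    also have "\<dots> = cp V ?aIXY (cp V (tM V (tM V (ident V ?I) (lunit V X)) (ident V Y)) ?P)"
      using cassoc[OF hP tM_hom[OF h1lX hidY] haIXY] by simp
    also have "cp V (tM V (tM V (ident V ?I) (lunit V X)) (ident V Y)) ?P
        = tM V (cp V (tM V (ident V ?I) (lunit V X)) ?a2) (cp V (ident V Y) (ident V Y))"
      using tM_cp[OF ha2 h1lX hidY hidY] by simp
    also have "\<dots> = tM V (tM V (runit V ?I) (ident V X)) (ident V Y)"
      using tri2 id_r[OF hidY] by simp
    finally show ?thesis .
  qed
  have "cp V (tM V (ident V ?I) ?L) ?a1 = cp V (tM V (ident V ?I) ?R) ?a1"
  proof (rule iso_rcancel[OF _ hP])
    show "is_iso V ?P" using iso_tM_id[OF asc_iso[OF I I X] ha2 Y] .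
    show "cp V (tM V (ident V ?I) ?L) ?a1 \<in> Hom V (tO V (tO V ?I (tO V ?I X)) Y) (tO V ?I (tO V X Y))"
      using ha1 hid hL by blast
    show "cp V (tM V (ident V ?I) ?R) ?a1 \<in> Hom V (tO V (tO V ?I (tO V ?I X)) Y) (tO V ?I (tO V X Y))"
      using ha1 hid hR by blast
    show "cp V (cp V (tM V (ident V ?I) ?L) ?a1) ?P = cp V (cp V (tM V (ident V ?I) ?R) ?a1) ?P"
      using LHS RHS cassoc[OF hP ha1 tM_hom[OF hid hL]] cassoc[OF hP ha1 tM_hom[OF hid hR]] by simp
  qed
  hence "tM V (ident V ?I) ?L = tM V (ident V ?I) ?R"
    using iso_rcancel[OF asc_iso[OF I IX Y] ha1] tM_hom[OF hid hL] tM_hom[OF hid hR] by blast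
  thus ?thesis using faithful_I[OF hL hR] by blast
qed

end


definition selfC :: "('o,'m,'z) mcat_scheme \<Rightarrow> ('o,'m,'o,'m) gcat" where
 "selfC V = \<lparr>gOb = Ob V, gHom = (\<lambda>X A B. Hom V (tO V X A) B),
    reix = (\<lambda>A B \<alpha> f. cp V f (tM V \<alpha> (ident V A))),
    gcp = (\<lambda>Y X A B D g f. cp V g (cp V (tM V (ident V Y) f) (asc V Y X A))),
    gid = (\<lambda>A. lunit V A)\<rparr>"

context mon begin

lemma self_reix: "reix (selfC V) A B \<alpha> f = cp V f (tM V \<alpha> (ident V A))"
  by (simp add: selfC_def)
lemma self_gcp: "gcp (selfC V) Y X A B D g f = cp V g (cp V (tM V (ident V Y) f) (asc V Y X A))"
  by (simp add: selfC_def)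
lemma self_gHom: "gHom (selfC V) X A B = Hom V (tO V X A) B"
  by (simp add: selfC_def)
lemma self_gOb: "gOb (selfC V) = Ob V"
  by (simp add: selfC_def)
lemma self_gid: "gid (selfC V) A = lunit V A"
  by (simp add: selfC_def)

lemma ax5:
  assumes X: "X \<in> Ob V" and Y: "Y \<in> Ob V" and Z: "Z \<in> Ob V" and A: "A \<in> Ob V"
    and a: "\<alpha> \<in> Hom V Y X" and b: "\<beta> \<in> Hom V Z Y" and f: "f \<in> Hom V (tO V X A) B"
  shows "cp V f (tM V (cp V \<alpha> \<beta>) (ident V A)) = cp V (cp V f (tM V \<alpha> (ident V A))) (tM V \<beta> (ident V A))"
proof -
  have iA: "ident V A \<in> Hom V A A" using A by blast
  have "tM V (cp V \<alpha> \<beta>) (ident V A) = tM V (cp V \<alpha> \<beta>) (cp V (ident V A) (ident V A))"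
    using id_r[OF iA] by simp
  also have "\<dots> = cp V (tM V \<alpha> (ident V A)) (tM V \<beta> (ident V A))"
    using tM_cp[OF b a iA iA] .
  finally show ?thesis using cassoc[OF tM_hom[OF b iA] tM_hom[OF a iA] f] by simp
qed

lemma ax6:
  assumes A: "A \<in> Ob V" and B: "B \<in> Ob V"
    and a: "\<alpha> \<in> Hom V X' X" and b: "\<beta> \<in> Hom V Y' Y"
    and f: "f \<in> Hom V (tO V X A) B" and g: "g \<in> Hom V (tO V Y B) D"
  shows "cp V (cp V g (tM V \<beta> (ident V B))) (cp V (tM V (ident V Y') (cp V f (tM V \<alpha> (ident V A)))) (asc V Y' X' A))
       = cp V (cp V g (cp V (tM V (ident V Y) f) (asc V Y X A))) (tM V (tM V \<beta> \<alpha>) (ident V A))"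
  (is "?L = ?R")
proof -
  have X: "X \<in> Ob V" "X' \<in> Ob V" using a hom_ob by auto
  have Y: "Y \<in> Ob V" "Y' \<in> Ob V" using b hom_ob by auto
  have iA: "ident V A \<in> Hom V A A" using A by blast
  have iB: "ident V B \<in> Hom V B B" using B by blast
  have iY: "ident V Y \<in> Hom V Y Y" using Y by blast
  have iY': "ident V Y' \<in> Hom V Y' Y'" using Y by blast
  let ?f' = "cp V f (tM V \<alpha> (ident V A))"
  have aA: "tM V \<alpha> (ident V A) \<in> Hom V (tO V X' A) (tO V X A)" using a iA by blast
  have f': "?f' \<in> Hom V (tO V X' A) B" using aA f by blast
  have a1: "asc V Y' X' A \<in> Hom V (tO V (tO V Y' X') A) (tO V Y' (tO V X' A))" using X Y A by blast
  have a2: "asc V Y X A \<in> Hom V (tO V (tO V Y X) A) (tO V Y (tO V X A))" using X Y A by blast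
  have bB: "tM V \<beta> (ident V B) \<in> Hom V (tO V Y' B) (tO V Y B)" using b iB by blast
  have Yf: "tM V (ident V Y) f \<in> Hom V (tO V Y (tO V X A)) (tO V Y B)" using iY f by blast
  have Y'f': "tM V (ident V Y') ?f' \<in> Hom V (tO V Y' (tO V X' A)) (tO V Y' B)" using iY' f' by blast
  have ba: "tM V (tM V \<beta> \<alpha>) (ident V A) \<in> Hom V (tO V (tO V Y' X') A) (tO V (tO V Y X) A)"
    using a b iA by blast
  have ba': "tM V \<beta> (tM V \<alpha> (ident V A)) \<in> Hom V (tO V Y' (tO V X' A)) (tO V Y (tO V X A))"
    using b aA by blast
  have nat: "cp V (asc V Y X A) (tM V (tM V \<beta> \<alpha>) (ident V A)) = cp V (tM V \<beta> (tM V \<alpha> (ident V A))) (asc V Y' X' A)"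
    using asc_nat[OF b a iA] .
  have k1: "cp V (tM V (ident V Y) f) (tM V \<beta> (tM V \<alpha> (ident V A))) = tM V \<beta> ?f'"
    using tM_cp[OF b iY aA f] id_l[OF b] by simp
  have k2: "cp V (tM V \<beta> (ident V B)) (tM V (ident V Y') ?f') = tM V \<beta> ?f'"
    using tM_cp[OF iY' b f' iB] id_r[OF b] id_l[OF f'] by simp
  have "?R = cp V g (cp V (cp V (tM V (ident V Y) f) (asc V Y X A)) (tM V (tM V \<beta> \<alpha>) (ident V A)))"
    using cassoc[OF ba cp_hom[OF a2 Yf] g] by simp
  also have "\<dots> = cp V g (cp V (tM V (ident V Y) f) (cp V (asc V Y X A) (tM V (tM V \<beta> \<alpha>) (ident V A))))"
    using cassoc[OF ba a2 Yf] by simp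
  also have "\<dots> = cp V g (cp V (tM V (ident V Y) f) (cp V (tM V \<beta> (tM V \<alpha> (ident V A))) (asc V Y' X' A)))"
    using nat by simp
  also have "\<dots> = cp V g (cp V (tM V \<beta> ?f') (asc V Y' X' A))"
    using cassoc[OF a1 ba' Yf] k1 by simp
  finally have R: "?R = cp V g (cp V (tM V \<beta> ?f') (asc V Y' X' A))" .
  have "?L = cp V g (cp V (tM V \<beta> (ident V B)) (cp V (tM V (ident V Y') ?f') (asc V Y' X' A)))"
    using cassoc[OF cp_hom[OF a1 Y'f'] bB g] by simp
  also have "\<dots> = cp V g (cp V (tM V \<beta> ?f') (asc V Y' X' A))"
    using cassoc[OF a1 Y'f' bB] k2 by simp
  finally show ?thesis using R by simp
qed

end

context mon begin

lemma ax7: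
  assumes X: "X \<in> Ob V" and Y: "Y \<in> Ob V" and Z: "Z \<in> Ob V" and A: "A \<in> Ob V" and B: "B \<in> Ob V" and D: "D \<in> Ob V"
    and f: "f \<in> Hom V (tO V X A) B" and g: "g \<in> Hom V (tO V Y B) D" and h: "h \<in> Hom V (tO V Z D) E"
  shows "cp V (cp V h (cp V (tM V (ident V Z) g) (asc V Z Y B))) (cp V (tM V (ident V (tO V Z Y)) f) (asc V (tO V Z Y) X A))
   = cp V (cp V h (cp V (tM V (ident V Z) (cp V g (cp V (tM V (ident V Y) f) (asc V Y X A)))) (asc V Z (tO V Y X) A))) (tM V (asc V Z Y X) (ident V A))"
  (is "?L = ?R")
proof -
  have iZ: "ident V Z \<in> Hom V Z Z" using Z by blast
  have iY: "ident V Y \<in> Hom V Y Y" using Y by blast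
  have iA: "ident V A \<in> Hom V A A" using A by blast
  have ZY: "tO V Z Y \<in> Ob V" using Z Y by blast
  have YX: "tO V Y X \<in> Ob V" using X Y by blast
  have XA: "tO V X A \<in> Ob V" using X A by blast
  have Zg: "tM V (ident V Z) g \<in> Hom V (tO V Z (tO V Y B)) (tO V Z D)" using iZ g by blast
  have aZYB: "asc V Z Y B \<in> Hom V (tO V (tO V Z Y) B) (tO V Z (tO V Y B))" using Z Y B by blast
  have fa: "tM V (tM V (ident V Z) (ident V Y)) f \<in> Hom V (tO V (tO V Z Y) (tO V X A)) (tO V (tO V Z Y) B)"
    using iZ iY f by blast
  have a2: "asc V (tO V Z Y) X A \<in> Hom V (tO V (tO V (tO V Z Y) X) A) (tO V (tO V Z Y) (tO V X A))"
    using ZY X A by blast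
  have aZYXA: "asc V Z Y (tO V X A) \<in> Hom V (tO V (tO V Z Y) (tO V X A)) (tO V Z (tO V Y (tO V X A)))"
    using Z Y XA by blast
  have Yf: "tM V (ident V Y) f \<in> Hom V (tO V Y (tO V X A)) (tO V Y B)" using iY f by blast
  have ZYf: "tM V (ident V Z) (tM V (ident V Y) f) \<in> Hom V (tO V Z (tO V Y (tO V X A))) (tO V Z (tO V Y B))"
    using iZ Yf by blast
  have aYXA: "asc V Y X A \<in> Hom V (tO V (tO V Y X) A) (tO V Y (tO V X A))" using Y X A by blast
  have ZaYXA: "tM V (ident V Z) (asc V Y X A) \<in> Hom V (tO V Z (tO V (tO V Y X) A)) (tO V Z (tO V Y (tO V X A)))"
    using iZ aYXA by blast
  have aZYXA2: "asc V Z (tO V Y X) A \<in> Hom V (tO V (tO V Z (tO V Y X)) A) (tO V Z (tO V (tO V Y X) A))"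
    using Z YX A by blast
  have aZYXi: "tM V (asc V Z Y X) (ident V A) \<in> Hom V (tO V (tO V (tO V Z Y) X) A) (tO V (tO V Z (tO V Y X)) A)"
    using Z Y X iA by blast
  let ?G = "cp V g (cp V (tM V (ident V Y) f) (asc V Y X A))"
  have G: "?G \<in> Hom V (tO V (tO V Y X) A) D" using aYXA Yf g by blast
  have ZG: "tM V (ident V Z) ?G = cp V (tM V (ident V Z) g) (cp V (tM V (ident V Z) (tM V (ident V Y) f)) (tM V (ident V Z) (asc V Y X A)))"
  proof -
    have "tM V (ident V Z) ?G = cp V (tM V (ident V Z) g) (tM V (ident V Z) (cp V (tM V (ident V Y) f) (asc V Y X A)))"
      using tM_cp[OF iZ iZ cp_hom[OF aYXA Yf] g] id_r[OF iZ] by simp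
    also have "tM V (ident V Z) (cp V (tM V (ident V Y) f) (asc V Y X A)) = cp V (tM V (ident V Z) (tM V (ident V Y) f)) (tM V (ident V Z) (asc V Y X A))"
      using tM_cp[OF iZ iZ aYXA Yf] id_r[OF iZ] by simp
    finally show ?thesis .
  qed
  have pent: "cp V (tM V (ident V Z) (asc V Y X A)) (cp V (asc V Z (tO V Y X) A) (tM V (asc V Z Y X) (ident V A)))
      = cp V (asc V Z Y (tO V X A)) (asc V (tO V Z Y) X A)" using pentagon[OF Z Y X A] .
  have nat: "cp V (asc V Z Y B) (tM V (tM V (ident V Z) (ident V Y)) f) = cp V (tM V (ident V Z) (tM V (ident V Y) f)) (asc V Z Y (tO V X A))"
    using asc_nat[OF iZ iY f] .
  let ?Q = "cp V (asc V Z Y (tO V X A)) (asc V (tO V Z Y) X A)"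
  have Q: "?Q \<in> Hom V (tO V (tO V (tO V Z Y) X) A) (tO V Z (tO V Y (tO V X A)))" using a2 aZYXA by blast
  have "?L = cp V h (cp V (cp V (tM V (ident V Z) g) (asc V Z Y B)) (cp V (tM V (tM V (ident V Z) (ident V Y)) f) (asc V (tO V Z Y) X A)))"
    using cassoc[OF cp_hom[OF a2 fa] cp_hom[OF aZYB Zg] h] tM_id[OF Z Y] by simp
  also have "\<dots> = cp V h (cp V (tM V (ident V Z) g) (cp V (asc V Z Y B) (cp V (tM V (tM V (ident V Z) (ident V Y)) f) (asc V (tO V Z Y) X A))))"
    using cassoc[OF cp_hom[OF a2 fa] aZYB Zg] by simp
  also have "cp V (asc V Z Y B) (cp V (tM V (tM V (ident V Z) (ident V Y)) f) (asc V (tO V Z Y) X A))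
      = cp V (tM V (ident V Z) (tM V (ident V Y) f)) ?Q"
    using cassoc[OF a2 fa aZYB] nat cassoc[OF a2 aZYXA ZYf] by simp
  finally have L: "?L = cp V h (cp V (tM V (ident V Z) g) (cp V (tM V (ident V Z) (tM V (ident V Y) f)) ?Q))" .
  have "?R = cp V h (cp V (tM V (ident V Z) ?G) (cp V (asc V Z (tO V Y X) A) (tM V (asc V Z Y X) (ident V A))))"
    using cassoc[OF aZYXi cp_hom[OF aZYXA2 tM_hom[OF iZ G]] h] cassoc[OF aZYXi aZYXA2 tM_hom[OF iZ G]] by simp
  also have "cp V (tM V (ident V Z) ?G) (cp V (asc V Z (tO V Y X) A) (tM V (asc V Z Y X) (ident V A)))
     = cp V (tM V (ident V Z) g) (cp V (tM V (ident V Z) (tM V (ident V Y) f)) ?Q)"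
  proof -
    let ?S = "cp V (asc V Z (tO V Y X) A) (tM V (asc V Z Y X) (ident V A))"
    have S: "?S \<in> Hom V (tO V (tO V (tO V Z Y) X) A) (tO V Z (tO V (tO V Y X) A))" using aZYXi aZYXA2 by blast
    have "cp V (tM V (ident V Z) ?G) ?S = cp V (tM V (ident V Z) g) (cp V (cp V (tM V (ident V Z) (tM V (ident V Y) f)) (tM V (ident V Z) (asc V Y X A))) ?S)"
      using ZG cassoc[OF S cp_hom[OF ZaYXA ZYf] Zg] by simp
    also have "cp V (cp V (tM V (ident V Z) (tM V (ident V Y) f)) (tM V (ident V Z) (asc V Y X A))) ?S
       = cp V (tM V (ident V Z) (tM V (ident V Y) f)) ?Q"
      using cassoc[OF S ZaYXA ZYf] pent by simp
    finally show ?thesis .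
  qed
  finally show ?thesis using L by simp
qed

lemma unitR:
  assumes X: "X \<in> Ob V" and A: "A \<in> Ob V" and f: "f \<in> Hom V (tO V X A) B"
  shows "cp V f (cp V (tM V (ident V X) (lunit V A)) (asc V X (unitO V) A)) = cp V f (tM V (runit V X) (ident V A))"
  using triangle[OF X A] by simp

lemma unitL:
  assumes X: "X \<in> Ob V" and A: "A \<in> Ob V" and f: "f \<in> Hom V (tO V X A) B"
  shows "cp V (lunit V B) (cp V (tM V (ident V (unitO V)) f) (asc V (unitO V) X A)) = cp V f (tM V (lunit V X) (ident V A))"
proof -
  have B: "B \<in> Ob V" using f hom_ob by blast
  have XA: "tO V X A \<in> Ob V" using X A by blast
  have a: "asc V (unitO V) X A \<in> Hom V (tO V (tO V (unitO V) X) A) (tO V (unitO V) (tO V X A))" using X A by blast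
  have If: "tM V (ident V (unitO V)) f \<in> Hom V (tO V (unitO V) (tO V X A)) (tO V (unitO V) B)" using f by blast
  have l: "lunit V (tO V X A) \<in> Hom V (tO V (unitO V) (tO V X A)) (tO V X A)" using XA by blast
  have "cp V (lunit V B) (cp V (tM V (ident V (unitO V)) f) (asc V (unitO V) X A))
    = cp V (cp V f (lunit V (tO V X A))) (asc V (unitO V) X A)"
    using cassoc[OF a If lunit_hom[OF B]] lunit_nat[OF f] by simp
  also have "\<dots> = cp V f (tM V (lunit V X) (ident V A))"
    using cassoc[OF a l f] kelly[OF X A] by simp
  finally show ?thesis .
qed

lemma self_graded: "is_graded_cat V (selfC V)"
  unfolding is_graded_cat_def self_reix self_gcp self_gHom self_gOb self_gid
proof (intro conjI ballI allI impI)
  fix X Y A B \<alpha> f assume "X \<in> Ob V" "Y \<in> Ob V" "A \<in> Ob V" "B \<in> Ob V"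
    "\<alpha> \<in> Hom V Y X" "f \<in> Hom V (tO V X A) B"
  thus "cp V f (tM V \<alpha> (ident V A)) \<in> Hom V (tO V Y A) B" by blast
next
  fix X Y A B D f g assume "X \<in> Ob V" "Y \<in> Ob V" "A \<in> Ob V" "B \<in> Ob V" "D \<in> Ob V"
    "f \<in> Hom V (tO V X A) B" "g \<in> Hom V (tO V Y B) D"
  thus "cp V g (cp V (tM V (ident V Y) f) (asc V Y X A)) \<in> Hom V (tO V (tO V Y X) A) D" by blast
next
  fix A assume "A \<in> Ob V" thus "lunit V A \<in> Hom V (tO V (unitO V) A) A" by blast
next
  fix X A B f assume "X \<in> Ob V" "A \<in> Ob V" "B \<in> Ob V" "f \<in> Hom V (tO V X A) B"
  thus "cp V f (tM V (ident V X) (ident V A)) = f" using tM_id id_r by simp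
next
  fix X Y Z A B \<alpha> \<beta> f assume "X \<in> Ob V" "Y \<in> Ob V" "Z \<in> Ob V" "A \<in> Ob V" "B \<in> Ob V"
    "\<alpha> \<in> Hom V Y X" "\<beta> \<in> Hom V Z Y" "f \<in> Hom V (tO V X A) B"
  thus "cp V f (tM V (cp V \<alpha> \<beta>) (ident V A)) = cp V (cp V f (tM V \<alpha> (ident V A))) (tM V \<beta> (ident V A))"
    using ax5 by blast
next
  fix X X' Y Y' A B D \<alpha> \<beta> f g assume "X \<in> Ob V" "X' \<in> Ob V" "Y \<in> Ob V" "Y' \<in> Ob V"
    "A \<in> Ob V" "B \<in> Ob V" "D \<in> Ob V"
    "\<alpha> \<in> Hom V X' X" "\<beta> \<in> Hom V Y' Y" "f \<in> Hom V (tO V X A) B" "g \<in> Hom V (tO V Y B) D"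
  thus "cp V (cp V g (tM V \<beta> (ident V B))) (cp V (tM V (ident V Y') (cp V f (tM V \<alpha> (ident V A)))) (asc V Y' X' A))
       = cp V (cp V g (cp V (tM V (ident V Y) f) (asc V Y X A))) (tM V (tM V \<beta> \<alpha>) (ident V A))"
    using ax6 by blast
next
  fix X Y Z A B D E f g h assume "X \<in> Ob V" "Y \<in> Ob V" "Z \<in> Ob V" "A \<in> Ob V" "B \<in> Ob V" "D \<in> Ob V" "E \<in> Ob V"
    "f \<in> Hom V (tO V X A) B" "g \<in> Hom V (tO V Y B) D" "h \<in> Hom V (tO V Z D) E"
  thus "cp V (cp V h (cp V (tM V (ident V Z) g) (asc V Z Y B))) (cp V (tM V (ident V (tO V Z Y)) f) (asc V (tO V Z Y) X A))
   = cp V (cp V h (cp V (tM V (ident V Z) (cp V g (cp V (tM V (ident V Y) f) (asc V Y X A)))) (asc V Z (tO V Y X) A))) (tM V (asc V Z Y X) (ident V A))"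
    using ax7 by blast
next
  fix X A B f assume "X \<in> Ob V" "A \<in> Ob V" "B \<in> Ob V" "f \<in> Hom V (tO V X A) B"
  thus "cp V f (cp V (tM V (ident V X) (lunit V A)) (asc V X (unitO V) A)) = cp V f (tM V (runit V X) (ident V A))"
    using unitR by blast
next
  fix X A B f assume "X \<in> Ob V" "A \<in> Ob V" "B \<in> Ob V" "f \<in> Hom V (tO V X A) B"
  thus "cp V (lunit V B) (cp V (tM V (ident V (unitO V)) f) (asc V (unitO V) X A)) = cp V f (tM V (lunit V X) (ident V A))"
    using unitL by blast
qed

end


lemma dir1:
  fixes V :: "('o,'m,'z) mcat_scheme" and C :: "('o,'m,'c,'d,'w) gcat_scheme"
  assumes B: "is_braided V" and S: "is_symmetric V" and G: "is_graded_cat V C"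
    and sq: "is_graded_square V C X X' A A' B B' f g \<phi> \<phi>'"
  shows "is_graded_square V C X' X A B A' B' \<phi> \<phi>' f g"
proof -
  have M: "is_monoidal V" using B unfolding is_braided_def by blast
  interpret mon V using M by unfold_locales
  note Bu = B[unfolded is_braided_def]
  note Gu = G[unfolded is_graded_cat_def]
  have obs: "X \<in> Ob V" "X' \<in> Ob V" "A \<in> gOb C" "A' \<in> gOb C" "B \<in> gOb C" "B' \<in> gOb C"
    and hs: "f \<in> gHom C X A A'" "g \<in> gHom C X B B'" "\<phi> \<in> gHom C X' A B" "\<phi>' \<in> gHom C X' A' B'"
    and eq: "gcp C X X' A B B' g \<phi> = reix C A B' (brd V X X') (gcp C X' X A A' B' \<phi>' f)"
    using sq unfolding is_graded_square_def by auto
  let ?h = "gcp C X' X A A' B' \<phi>' f"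
  have XX: "tO V X X' \<in> Ob V" "tO V X' X \<in> Ob V" using obs by blast+
  have hh: "?h \<in> gHom C (tO V X' X) A B'"
    using Gu[THEN conjunct2, THEN conjunct1] obs hs by blast
  have c1: "brd V X X' \<in> Hom V (tO V X X') (tO V X' X)" using Bu obs by blast
  have c2: "brd V X' X \<in> Hom V (tO V X' X) (tO V X X')" using Bu obs by blast
  have "reix C A B' (brd V X' X) (reix C A B' (brd V X X') ?h)
       = reix C A B' (cp V (brd V X X') (brd V X' X)) ?h"
    using Gu[THEN conjunct2, THEN conjunct2, THEN conjunct2, THEN conjunct2, THEN conjunct1]
      XX obs c1 c2 hh by metis
  also have "cp V (brd V X X') (brd V X' X) = ident V (tO V X' X)"
    using S obs unfolding is_symmetric_def by blast
  also have "reix C A B' (ident V (tO V X' X)) ?h = ?h"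
    using Gu[THEN conjunct2, THEN conjunct2, THEN conjunct2, THEN conjunct1] XX obs hh by blast
  finally show ?thesis unfolding is_graded_square_def using obs hs eq by simp
qed

lemma dir2:
  fixes V :: "('o,'m) mcat"
  assumes B: "is_braided V"
    and H: "\<forall>C :: ('o,'m,'o,'m) gcat. is_graded_cat V C \<longrightarrow> squares_transpose V C"
    and X: "X \<in> Ob V" and X': "X' \<in> Ob V"
  shows "cp V (brd V X X') (brd V X' X) = ident V (tO V X' X)"
proof -
  have M: "is_monoidal V" using B unfolding is_braided_def by blast
  interpret mon V using M by unfold_locales
  note Bu = B[unfolded is_braided_def]
  let ?I = "unitO V"
  let ?C = "selfC V"
  have I: "?I \<in> Ob V" by blast
  have ST: "squares_transpose V ?C" using H self_graded by blast
  have c: "brd V X X' \<in> Hom V (tO V X X') (tO V X' X)" using Bu X X' by blast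
  have c': "brd V X' X \<in> Hom V (tO V X' X) (tO V X X')" using Bu X X' by blast
  let ?a = "asc V X X' ?I"
  let ?a' = "asc V X' X ?I"
  have ha: "?a \<in> Hom V (tO V (tO V X X') ?I) (tO V X (tO V X' ?I))" using X X' by blast
  have ha': "?a' \<in> Hom V (tO V (tO V X' X) ?I) (tO V X' (tO V X ?I))" using X X' by blast
  obtain ai where ai: "ai \<in> Hom V (tO V X (tO V X' ?I)) (tO V (tO V X X') ?I)"
     "cp V ai ?a = ident V (tO V (tO V X X') ?I)"
    using iso_inv[OF asc_iso[OF X X' I] ha] by metis
  have iI: "ident V ?I \<in> Hom V ?I ?I" by blast
  let ?cI = "tM V (brd V X X') (ident V ?I)"
  have cI: "?cI \<in> Hom V (tO V (tO V X X') ?I) (tO V (tO V X' X) ?I)" using c iI by blast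
  let ?g = "cp V ?a' (cp V ?cI ai)"
  have hg: "?g \<in> Hom V (tO V X (tO V X' ?I)) (tO V X' (tO V X ?I))" using ai cI ha' by blast
  let ?A' = "tO V X ?I" and ?B = "tO V X' ?I" and ?B' = "tO V X' (tO V X ?I)"
  have XI: "?A' \<in> Ob V" "?B \<in> Ob V" "?B' \<in> Ob V" using X X' by blast+
  have iXI: "ident V ?A' \<in> Hom V ?A' ?A'" using XI by blast
  have comp1: "gcp ?C X' X ?I ?A' ?B' (ident V ?B') (ident V ?A') = ?a'"
  proof -
    have "tM V (ident V X') (ident V ?A') = ident V ?B'" using tM_id X' XI by blast
    thus ?thesis unfolding self_gcp using id_l[OF ha'] id_l[OF id_hom[OF XI(3)]] by simp
  qed
  have comp2: "gcp ?C X X' ?I ?B ?B' ?g (ident V ?B) = cp V ?a' ?cI"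
  proof -
    have "tM V (ident V X) (ident V ?B) = ident V (tO V X ?B)" using tM_id X XI by blast
    hence "gcp ?C X X' ?I ?B ?B' ?g (ident V ?B) = cp V ?g ?a"
      unfolding self_gcp using id_l[OF ha] by simp
    also have "\<dots> = cp V ?a' (cp V ?cI (cp V ai ?a))"
      using cassoc[OF ha ai(1) cI] cassoc[OF ha cp_hom[OF ai(1) cI] ha'] by simp
    also have "\<dots> = cp V ?a' ?cI" using ai(2) id_r[OF cI] by simp
    finally show ?thesis .
  qed
  have sq: "is_graded_square V ?C X X' ?I ?A' ?B ?B' (ident V ?A') ?g (ident V ?B) (ident V ?B')"
    unfolding is_graded_square_def self_gOb self_gHom
    using X X' I XI hg comp1 comp2 self_reix
    by (auto intro!: id_hom)
  have sq2: "is_graded_square V ?C X' X ?I ?B ?A' ?B' (ident V ?B) (ident V ?B') (ident V ?A') ?g"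
    using ST sq unfolding squares_transpose_def by blast
  hence e: "?a' = cp V (cp V ?a' ?cI) (tM V (brd V X' X) (ident V ?I))"
    unfolding is_graded_square_def using comp1 comp2 self_reix by simp
  have XX: "tO V X' X \<in> Ob V" using X X' by blast
  let ?u = "cp V (brd V X X') (brd V X' X)"
  have u: "?u \<in> Hom V (tO V X' X) (tO V X' X)" using c c' by blast
  have c'I: "tM V (brd V X' X) (ident V ?I) \<in> Hom V (tO V (tO V X' X) ?I) (tO V (tO V X X') ?I)"
    using c' iI by blast
  have "cp V ?cI (tM V (brd V X' X) (ident V ?I)) = tM V ?u (ident V ?I)"
    using tM_cp[OF c' c iI iI] id_r[OF iI] by simp
  hence "cp V ?a' (ident V (tO V (tO V X' X) ?I)) = cp V ?a' (tM V ?u (ident V ?I))"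
    using e id_r[OF ha'] cassoc[OF c'I cI ha'] by simp
  hence uI: "ident V (tO V (tO V X' X) ?I) = tM V ?u (ident V ?I)"
    by (rule iso_lcancel[OF asc_iso[OF X' X I] ha' id_hom[OF tO_ob[OF XX I]] tM_hom[OF u iI]])
  have r: "runit V (tO V X' X) \<in> Hom V (tO V (tO V X' X) ?I) (tO V X' X)" using XX by blast
  have "cp V ?u (runit V (tO V X' X)) = cp V (ident V (tO V X' X)) (runit V (tO V X' X))"
    using runit_nat[OF u] uI[symmetric] id_r[OF r] id_l[OF r] by simp
  thus ?thesis by (rule iso_rcancel[OF runit_iso[OF XX] r u id_hom[OF XX]])
qed

theorem proposition13p5:
  fixes V :: "('o,'m) mcat"
  assumes "is_braided V"
  shows "(is_symmetric V \<longrightarrow>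
            (\<forall>C :: ('o,'m,'c,'d) gcat. is_graded_cat V C \<longrightarrow> squares_transpose V C))
       \<and> ((\<forall>C :: ('o,'m,'o,'m) gcat. is_graded_cat V C \<longrightarrow> squares_transpose V C)
            \<longrightarrow> is_symmetric V)"
proof (intro conjI impI allI)
  fix C :: "('o,'m,'c,'d) gcat"
  assume "is_symmetric V" "is_graded_cat V C"
  show "squares_transpose V C" unfolding squares_transpose_def
  proof (intro allI impI)
    fix X X' A A' B B' f g \<phi> \<phi>'
    assume "is_graded_square V C X X' A A' B B' f g \<phi> \<phi>'"
    thus "is_graded_square V C X' X A B A' B' \<phi> \<phi>' f g"
      by (rule dir1[OF assms \<open>is_symmetric V\<close> \<open>is_graded_cat V C\<close>])
  qed
next
  assume H: "\<forall>C :: ('o,'m,'o,'m) gcat. is_graded_cat V C \<longrightarrow> squares_transpose V C"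
  show "is_symmetric V" unfolding is_symmetric_def
  proof (intro ballI)
    fix X X' assume "X \<in> Ob V" "X' \<in> Ob V"
    show "cp V (brd V X' X) (brd V X X') = ident V (tO V X X')"
      by (rule dir2[OF assms H \<open>X' \<in> Ob V\<close> \<open>X \<in> Ob V\<close>])
  qed
qed


end
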